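(* Let $E:[0,\infty)\times\mathbb{R}^2\to\mathbb{R}^2$ and $b:[0,\infty)\times\mathbb{R}^2\to\mathbb{R}$ be continuous with $b$ nowhere vanishing, $B=b\,e_3$. Let $\alpha=0.24169426078821$, $\beta=\alpha/4$, $\eta=0.12915286960590$, $\gamma=1/2-\alpha-\beta-\eta$. Fix $\Delta t>0$, $T>0$, $t^n=n\Delta t$, $t^{n+1/2}=t^n+\Delta t/2$, $N_T=\lfloor T/\Delta t\rfloor$. For each $\varepsilon>0$ let $(x^n_\varepsilon,v^n_\varepsilon)_{0\le n\le N_T}$ be generated (dropping the index $\varepsilon$ inside stages) by: given $(x^n,v^n)$, find stages $(x^{(i)},v^{(i)})$, $i=1,\dots,4$, with $$x^{(1)}=x^n+\tfrac{\alpha\Delta t}{\varepsilon}v^{(1)},\ v^{(1)}=v^n+\tfrac{\alpha\Delta t}{\varepsilon}F^{(1)},\ F^{(1)}=\tfrac{v^{(1)}}{\varepsilon}\wedge B(t^n,x^n)+E(t^n,x^n);$$ $$x^{(2)}=x^n-\tfrac{\alpha\Delta t}{\varepsilon}v^{(1)}+\tfrac{\alpha\Delta t}{\varepsilon}v^{(2)},\ v^{(2)}=v^n-\tfrac{\alpha\Delta t}{\varepsilon}F^{(1)}+\tfrac{\alpha\Delta t}{\varepsilon}F^{(2)},\ F^{(2)}=\tfrac{v^{(2)}}{\varepsilon}\wedge B(t^n,x^n)+E(t^n,x^n);$$ $$x^{(3)}=x^n+\tfrac{(1-\alpha)\Delta t}{\varepsilon}v^{(2)}+\tfrac{\alpha\Delta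 t}{\varepsilon}v^{(3)},\ v^{(3)}=v^n+\tfrac{(1-\alpha)\Delta t}{\varepsilon}F^{(2)}+\tfrac{\alpha\Delta t}{\varepsilon}F^{(3)},$$ $$F^{(3)}=\tfrac{v^{(3)}}{\varepsilon}\wedge B(t^{n+1},\bar x^{(2)})+E(t^{n+1},\bar x^{(2)}),\quad \bar x^{(2)}=x^n+\tfrac{\Delta t}{\varepsilon}v^{(2)};$$ $$x^{(4)}=x^n+\tfrac{\Delta t}{\varepsilon}\big(\beta v^{(1)}+\eta v^{(2)}+\gamma v^{(3)}+\alpha v^{(4)}\big),\ v^{(4)}=v^n+\tfrac{\Delta t}{\varepsilon}\big(\beta F^{(1)}+\eta F^{(2)}+\gamma F^{(3)}+\alpha F^{(4)}\big),$$ $$F^{(4)}=\tfrac{v^{(4)}}{\varepsilon}\wedge B(t^{n+1/2},\bar x^{(3)})+E(t^{n+1/2},\bar x^{(3)}),\quad \bar x^{(3)}=x^n+\tfrac{\Delta t}{4\varepsilon}(v^{(2)}+v^{(3)});$$ and finally $x^{n+1}=x^n+\frac{\Delta t}{6\varepsilon}(v^{(2)}+v^{(3)}+4v^{(4)})$, $v^{n+1}=v^n+\frac{\Delta t}{6\varepsilon}(F^{(2)}+F^{(3)}+4F^{(4)})$. Assume that for every $1\le n\le N_T$ the family $(x^n_\varepsilon,\varepsilon v^n_\varepsilon)_{\varepsilon>0}$ is bounded uniformly in $\varepsilon$ and that $(x^0_\varepsilon,\varepsilon v^0_\varepsilon)\to(y^0,0)$ as $\varepsilon\to0$. Then for every $0\le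 n\le N_T$, $x^n_\varepsilon\to y^n$ as $\varepsilon\to0$, where $(y^n)$ starts from $y^0$ and satisfies $$U^{(2)}=U(t^n,y^n),\quad y^{(2)}=y^n+\Delta t\,U^{(2)},\quad U^{(3)}=U(t^{n+1},y^{(2)}),$$ $$y^{(3)}=y^n+\tfrac{\Delta t}{4}(U^{(2)}+U^{(3)}),\quad U^{(4)}=U(t^{n+1/2},y^{(3)}),\quad y^{n+1}=y^n+\tfrac{\Delta t}{6}(U^{(2)}+U^{(3)}+4U^{(4)}).$$
   Context: Vectors of $\mathbb{R}^2$ are identified with vectors $(w_1,w_2,0)$ of $\mathbb{R}^3$, $e_3=(0,0,1)$, and $\wedge$ is the cross product; thus for $w\in\mathbb{R}^2$ and $B=b\,e_3$, $w\wedge B=b\,(w_2,-w_1)\in\mathbb{R}^2$. The guiding-center drift is $U(t,x)=\dfrac{E(t,x)\wedge B(t,x)}{\|B(t,x)\|^2}$. *)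

theory Defs
  imports "HOL-Analysis.Analysis"
begin

text \<open>Vectors of R^2 are represented as pairs real \<times> real. For w in R^2 and
  B = b e3, the cross product w \<and> B is b (w2, -w1).\<close>

definition wedge :: "real \<times> real \<Rightarrow> real \<Rightarrow> real \<times> real" where
  "wedge w bb = (bb * snd w, - (bb * fst w))"

definition alpha :: real where "alpha = 0.24169426078821"
definition beta :: real where "beta = alpha / 4"
definition eta :: real where "eta = 0.12915286960590"
definition gamma :: real where "gamma = 1/2 - alpha - beta - eta"

text \<open>Guiding-center drift U = (E \<and> B)/|B|^2 with B = b e3, so |B|^2 = b^2.\<close>
definition Udrift ::
  "(real \<Rightarrow> real \<times> real \<Rightarrow> real \<times> real) \<Rightarrow> (real \<Rightarrow> real \<times> real \<Rightarrow> real) \<Rightarrow>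
   real \<Rightarrow> real \<times> real \<Rightarrow> real \<times> real" where
  "Udrift E b t x = (1 / (b t x)^2) *\<^sub>R wedge (E t x) (b t x)"

definition rk_step ::
  "(real \<Rightarrow> real \<times> real \<Rightarrow> real \<times> real) \<Rightarrow> (real \<Rightarrow> real \<times> real \<Rightarrow> real) \<Rightarrow>
   real \<Rightarrow> real \<Rightarrow> real \<Rightarrow> real \<times> real \<Rightarrow> real \<times> real \<Rightarrow>
   (nat \<Rightarrow> real \<times> real) \<Rightarrow> (nat \<Rightarrow> real \<times> real) \<Rightarrow> real \<times> real \<Rightarrow> real \<times> real \<Rightarrow> bool" where
  "rk_step E b dt eps tn xn vn X V xn1 vn1 \<longleftrightarrow>
    (let Fz = (\<lambda>w t y. wedge ((1/eps) *\<^sub>R w) (b t y) + E t y);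
         c = alpha * dt / eps;
         xb2 = xn + (dt / eps) *\<^sub>R V 2;
         xb3 = xn + (dt / (4 * eps)) *\<^sub>R (V 2 + V 3);
         F1 = Fz (V 1) tn xn;
         F2 = Fz (V 2) tn xn;
         F3 = Fz (V 3) (tn + dt) xb2;
         F4 = Fz (V 4) (tn + dt / 2) xb3
     in X 1 = xn + c *\<^sub>R V 1 \<and>
        V 1 = vn + c *\<^sub>R F1 \<and>
        X 2 = xn - c *\<^sub>R V 1 + c *\<^sub>R V 2 \<and>
        V 2 = vn - c *\<^sub>R F1 + c *\<^sub>R F2 \<and>
        X 3 = xn + ((1 - alpha) * dt / eps) *\<^sub>R V 2 + c *\<^sub>R V 3 \<and>
        V 3 = vn + ((1 - alpha) * dt / eps) *\<^sub>R F2 + c *\<^sub>R F3 \<and>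
        X 4 = xn + (dt / eps) *\<^sub>R (beta *\<^sub>R V 1 + eta *\<^sub>R V 2 + gamma *\<^sub>R V 3 + alpha *\<^sub>R V 4) \<and>
        V 4 = vn + (dt / eps) *\<^sub>R (beta *\<^sub>R F1 + eta *\<^sub>R F2 + gamma *\<^sub>R F3 + alpha *\<^sub>R F4) \<and>
        xn1 = xn + (dt / (6 * eps)) *\<^sub>R (V 2 + V 3 + 4 *\<^sub>R V 4) \<and>
        vn1 = vn + (dt / (6 * eps)) *\<^sub>R (F2 + F3 + 4 *\<^sub>R F4))"

definition y_step ::
  "(real \<Rightarrow> real \<times> real \<Rightarrow> real \<times> real) \<Rightarrow> (real \<Rightarrow> real \<times> real \<Rightarrow> real) \<Rightarrow>
   real \<Rightarrow> real \<Rightarrow> real \<times> real \<Rightarrow> real \<times> real" where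
  "y_step E b dt tn yn =
    (let U2 = Udrift E b tn yn;
         y2 = yn + dt *\<^sub>R U2;
         U3 = Udrift E b (tn + dt) y2;
         y3 = yn + (dt / 4) *\<^sub>R (U2 + U3);
         U4 = Udrift E b (tn + dt / 2) y3
     in yn + (dt / 6) *\<^sub>R (U2 + U3 + 4 *\<^sub>R U4))"

primrec y_seq ::
  "(real \<Rightarrow> real \<times> real \<Rightarrow> real \<times> real) \<Rightarrow> (real \<Rightarrow> real \<times> real \<Rightarrow> real) \<Rightarrow>
   real \<Rightarrow> real \<times> real \<Rightarrow> nat \<Rightarrow> real \<times> real" where
  "y_seq E b dt y0 0 = y0"
| "y_seq E b dt y0 (Suc n) = y_step E b dt (real n * dt) (y_seq E b dt y0 n)"

end

theory Submission
  imports Defs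
begin

lemma cont_comp:
  assumes "continuous_on ({0..} \<times> UNIV) (\<lambda>p. f (fst p) (snd p))" "(t::real) \<ge> 0"
    "(p \<longlongrightarrow> p0) F"
  shows "((\<lambda>z. f t (p z)) \<longlongrightarrow> f t p0) F"
proof -
  have "((\<lambda>z. (\<lambda>q. f (fst q) (snd q)) (t, p z)) \<longlongrightarrow> (\<lambda>q. f (fst q) (snd q)) (t, p0)) F"
    by (rule continuous_on_tendsto_compose[OF assms(1)]) (use assms in \<open>auto intro!: tendsto_intros\<close>)
  then show ?thesis by simp
qed

lemma stage:
  fixes s bb :: "'x \<Rightarrow> real" and g e u :: "'x \<Rightarrow> real \<times> real" and c b0 :: real
    and e0 :: "real \<times> real"
  assumes c: "c \<noteq> 0" and b0: "b0 \<noteq> 0"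
    and s: "(s \<longlongrightarrow> 0) F" and g: "(g \<longlongrightarrow> 0) F" and bb: "(bb \<longlongrightarrow> b0) F"
    and e: "(e \<longlongrightarrow> e0) F"
    and eq: "eventually (\<lambda>z. s z *\<^sub>R u z = g z + c *\<^sub>R (wedge (u z) (bb z) + e z)) F"
  shows "(u \<longlongrightarrow> (1/b0\<^sup>2) *\<^sub>R wedge e0 b0) F"
    "((\<lambda>z. wedge (u z) (bb z) + e z) \<longlongrightarrow> 0) F"
proof -
  let ?A = "\<lambda>z. fst (g z) + c * fst (e z)"
  let ?B = "\<lambda>z. snd (g z) + c * snd (e z)"
  let ?d = "\<lambda>z. (s z)\<^sup>2 + c\<^sup>2 * (bb z)\<^sup>2"
  have d: "(?d \<longlongrightarrow> 0\<^sup>2 + c\<^sup>2 * b0\<^sup>2) F" by (intro tendsto_intros s bb)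
  have dnz0: "0\<^sup>2 + c\<^sup>2 * b0\<^sup>2 \<noteq> (0::real)" using c b0 by simp
  have ev: "eventually (\<lambda>z. u z = ((s z * ?A z + c * bb z * ?B z) / ?d z,
       (s z * ?B z - c * bb z * ?A z) / ?d z)) F"
    using eq tendsto_imp_eventually_ne[OF d dnz0]
  proof eventually_elim
    case (elim z)
    obtain u1 u2 where uu: "u z = (u1, u2)" by fastforce
    from elim(1) have e1: "s z * u1 - c * bb z * u2 = ?A z" and e2: "c * bb z * u1 + s z * u2 = ?B z"
      by (auto simp: uu wedge_def prod_eq_iff algebra_simps)
    have "?d z * u1 = s z * (s z * u1 - c * bb z * u2) + c * bb z * (c * bb z * u1 + s z * u2)"
      by (simp add: algebra_simps power2_eq_square)
    then have 1: "?d z * u1 = s z * ?A z + c * bb z * ?B z" using e1 e2 by simp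
    have "?d z * u2 = s z * (c * bb z * u1 + s z * u2) - c * bb z * (s z * u1 - c * bb z * u2)"
      by (simp add: algebra_simps power2_eq_square)
    then have 2: "?d z * u2 = s z * ?B z - c * bb z * ?A z" using e1 e2 by simp
    from 1 2 elim(2) show ?case by (simp add: uu field_simps)
  qed
  have lim: "((\<lambda>z. ((s z * ?A z + c * bb z * ?B z) / ?d z,
       (s z * ?B z - c * bb z * ?A z) / ?d z)) \<longlongrightarrow>
     ((0 * (0 + c * fst e0) + c * b0 * (0 + c * snd e0)) / (0\<^sup>2 + c\<^sup>2 * b0\<^sup>2),
      (0 * (0 + c * snd e0) - c * b0 * (0 + c * fst e0)) / (0\<^sup>2 + c\<^sup>2 * b0\<^sup>2))) F"
    using g by (intro tendsto_intros s bb e dnz0) (auto dest: tendsto_fst tendsto_snd)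
  have val: "((0 * (0 + c * fst e0) + c * b0 * (0 + c * snd e0)) / (0\<^sup>2 + c\<^sup>2 * b0\<^sup>2),
      (0 * (0 + c * snd e0) - c * b0 * (0 + c * fst e0)) / (0\<^sup>2 + c\<^sup>2 * b0\<^sup>2))
      = (1/b0\<^sup>2) *\<^sub>R wedge e0 b0"
    using c b0 by (simp add: wedge_def power2_eq_square field_simps)
  show U: "(u \<longlongrightarrow> (1/b0\<^sup>2) *\<^sub>R wedge e0 b0) F"
  proof (rule Lim_transform_eventually[OF lim[unfolded val]])
    show "\<forall>\<^sub>F x in F. ((s x * ?A x + c * bb x * ?B x) / ?d x,
       (s x * ?B x - c * bb x * ?A x) / ?d x) = u x" using ev by (rule eventually_mono) simp
  qed
  define U0 where "U0 = (1/b0\<^sup>2) *\<^sub>R wedge e0 b0"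
  have "((\<lambda>z. (bb z * snd (u z), -(bb z * fst (u z))) + e z) \<longlongrightarrow> (b0 * snd U0, -(b0 * fst U0)) + e0) F"
    using U unfolding U0_def[symmetric] by (intro tendsto_intros bb e)
  then have "((\<lambda>z. wedge (u z) (bb z) + e z) \<longlongrightarrow> wedge ((1/b0\<^sup>2) *\<^sub>R wedge e0 b0) b0 + e0) F"
    by (simp add: wedge_def U0_def)
  moreover have "wedge ((1/b0\<^sup>2) *\<^sub>R wedge e0 b0) b0 + e0 = 0"
    using b0 by (simp add: wedge_def power2_eq_square field_simps prod_eq_iff)
  ultimately show "((\<lambda>z. wedge (u z) (bb z) + e z) \<longlongrightarrow> 0) F" by simp
qed
theorem proposition3p4:
  fixes E :: "real \<Rightarrow> real \<times> real \<Rightarrow> real \<times> real"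
    and b :: "real \<Rightarrow> real \<times> real \<Rightarrow> real"
    and dt T :: real
    and x v :: "real \<Rightarrow> nat \<Rightarrow> real \<times> real"
    and X V :: "real \<Rightarrow> nat \<Rightarrow> nat \<Rightarrow> real \<times> real"
    and y0 :: "real \<times> real"
  assumes contE: "continuous_on ({0..} \<times> UNIV) (\<lambda>p. E (fst p) (snd p))"
    and contb: "continuous_on ({0..} \<times> UNIV) (\<lambda>p. b (fst p) (snd p))"
    and bnz: "\<forall>t\<ge>0. \<forall>z. b t z \<noteq> 0"
    and dt: "dt > 0" and T: "T > 0"
    and scheme: "\<forall>eps>0. \<forall>n < nat \<lfloor>T / dt\<rfloor>.
        rk_step E b dt eps (real n * dt) (x eps n) (v eps n) (X eps n) (V eps n)
          (x eps (Suc n)) (v eps (Suc n))"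
    and bounded: "\<forall>n. 1 \<le> n \<and> n \<le> nat \<lfloor>T / dt\<rfloor> \<longrightarrow>
        (\<exists>C. \<forall>eps>0. norm (x eps n, eps *\<^sub>R v eps n) \<le> C)"
    and init: "((\<lambda>eps. (x eps 0, eps *\<^sub>R v eps 0)) \<longlongrightarrow> (y0, 0)) (at_right 0)"
  shows "\<forall>n \<le> nat \<lfloor>T / dt\<rfloor>. ((\<lambda>eps. x eps n) \<longlongrightarrow> y_seq E b dt y0 n) (at_right 0)"
proof -
  let ?N = "nat \<lfloor>T / dt\<rfloor>"
  let ?F = "at_right (0::real)"
  have a0: "alpha \<noteq> 0" by (simp add: alpha_def)
  have main: "n \<le> ?N \<Longrightarrow> ((\<lambda>eps. x eps n) \<longlongrightarrow> y_seq E b dt y0 n) ?F \<and>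
      ((\<lambda>eps. eps *\<^sub>R v eps n) \<longlongrightarrow> 0) ?F" for n
  proof (induction n)
    case 0
    show ?case using tendsto_fst[OF init] tendsto_snd[OF init] by simp
  next
    case (Suc n)
    hence nN: "n < ?N" by simp
    from Suc.IH nN have IHx: "((\<lambda>eps. x eps n) \<longlongrightarrow> y_seq E b dt y0 n) ?F"
      and IHw: "((\<lambda>eps. eps *\<^sub>R v eps n) \<longlongrightarrow> 0) ?F" by auto
    define tn where "tn = real n * dt"
    have tn: "tn \<ge> 0" "tn + dt \<ge> 0" "tn + dt/2 \<ge> 0" using dt by (simp_all add: tn_def)
    define yn where "yn = y_seq E b dt y0 n"
    define u where "u i eps = (1/eps) *\<^sub>R V eps n i" for i eps
    define p3 where "p3 eps = x eps n + dt *\<^sub>R u 2 eps" for eps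
    define p4 where "p4 eps = x eps n + (dt/4) *\<^sub>R (u 2 eps + u 3 eps)" for eps
    define F1 where "F1 eps = wedge (u 1 eps) (b tn (x eps n)) + E tn (x eps n)" for eps
    define F2 where "F2 eps = wedge (u 2 eps) (b tn (x eps n)) + E tn (x eps n)" for eps
    define F3 where "F3 eps = wedge (u 3 eps) (b (tn+dt) (p3 eps)) + E (tn+dt) (p3 eps)" for eps
    define F4 where "F4 eps = wedge (u 4 eps) (b (tn+dt/2) (p4 eps)) + E (tn+dt/2) (p4 eps)" for eps
    define w where "w eps = eps *\<^sub>R v eps n" for eps
    have st: "\<forall>\<^sub>F eps in ?F.
       eps\<^sup>2 *\<^sub>R u 1 eps = w eps + (alpha*dt) *\<^sub>R F1 eps \<and>
       eps\<^sup>2 *\<^sub>R u 2 eps = (w eps - (alpha*dt) *\<^sub>R F1 eps) + (alpha*dt) *\<^sub>R F2 eps \<and>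
       eps\<^sup>2 *\<^sub>R u 3 eps = (w eps + ((1-alpha)*dt) *\<^sub>R F2 eps) + (alpha*dt) *\<^sub>R F3 eps \<and>
       eps\<^sup>2 *\<^sub>R u 4 eps = (w eps + dt *\<^sub>R (beta *\<^sub>R F1 eps + eta *\<^sub>R F2 eps + gamma *\<^sub>R F3 eps))
          + (alpha*dt) *\<^sub>R F4 eps \<and>
       x eps (Suc n) = x eps n + (dt/6) *\<^sub>R (u 2 eps + u 3 eps + 4 *\<^sub>R u 4 eps) \<and>
       eps *\<^sub>R v eps (Suc n) = w eps + (dt/6) *\<^sub>R (F2 eps + F3 eps + 4 *\<^sub>R F4 eps)"
      using eventually_at_right_less[of "0::real"]
    proof eventually_elim
      case (elim eps)
      hence e0: "eps \<noteq> 0" by simp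
      from scheme elim nN have rk: "rk_step E b dt eps tn (x eps n) (v eps n) (X eps n) (V eps n)
          (x eps (Suc n)) (v eps (Suc n))" by (auto simp: tn_def)
      have r1: "(dt / eps) *\<^sub>R V eps n 2 = dt *\<^sub>R u 2 eps" using e0 by (simp add: u_def)
      have r2: "(dt / (4 * eps)) *\<^sub>R (V eps n 2 + V eps n 3) = (dt/4) *\<^sub>R (u 2 eps + u 3 eps)"
        using e0 by (simp add: u_def scaleR_add_right)
      have r3: "(dt / (6 * eps)) *\<^sub>R (V eps n 2 + V eps n 3 + 4 *\<^sub>R V eps n 4)
          = (dt/6) *\<^sub>R (u 2 eps + u 3 eps + 4 *\<^sub>R u 4 eps)"
        using e0 by (simp add: u_def scaleR_add_right)
      note rk' = rk[unfolded rk_step_def Let_def r1 r2 r3, folded u_def p3_def p4_def,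
          folded F1_def F2_def F3_def F4_def]
      from rk' have q1: "V eps n 1 = v eps n + (alpha * dt / eps) *\<^sub>R F1 eps"
        and q2: "V eps n 2 = v eps n - (alpha * dt / eps) *\<^sub>R F1 eps + (alpha * dt / eps) *\<^sub>R F2 eps"
        and q3: "V eps n 3 = v eps n + ((1 - alpha) * dt / eps) *\<^sub>R F2 eps + (alpha * dt / eps) *\<^sub>R F3 eps"
        and q4: "V eps n 4 = v eps n + (dt / eps) *\<^sub>R (beta *\<^sub>R F1 eps + eta *\<^sub>R F2 eps + gamma *\<^sub>R F3 eps + alpha *\<^sub>R F4 eps)"
        and q5: "x eps (Suc n) = x eps n + (dt/6) *\<^sub>R (u 2 eps + u 3 eps + 4 *\<^sub>R u 4 eps)"
        and q6: "v eps (Suc n) = v eps n + (dt / (6 * eps)) *\<^sub>R (F2 eps + F3 eps + 4 *\<^sub>R F4 eps)"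
        by auto
      have "eps\<^sup>2 *\<^sub>R u 1 eps = w eps + (alpha*dt) *\<^sub>R F1 eps"
        using e0 q1 by (simp add: u_def w_def scaleR_add_right scaleR_diff_right power2_eq_square algebra_simps)
      moreover have "eps\<^sup>2 *\<^sub>R u 2 eps = (w eps - (alpha*dt) *\<^sub>R F1 eps) + (alpha*dt) *\<^sub>R F2 eps"
        using e0 q2 by (simp add: u_def w_def scaleR_add_right scaleR_diff_right power2_eq_square)
      moreover have "eps\<^sup>2 *\<^sub>R u 3 eps = (w eps + ((1-alpha)*dt) *\<^sub>R F2 eps) + (alpha*dt) *\<^sub>R F3 eps"
        using e0 q3 by (simp add: u_def w_def scaleR_add_right scaleR_diff_right power2_eq_square)
      moreover have "eps\<^sup>2 *\<^sub>R u 4 eps = (w eps + dt *\<^sub>R (beta *\<^sub>R F1 eps + eta *\<^sub>R F2 eps + gamma *\<^sub>R F3 eps))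
          + (alpha*dt) *\<^sub>R F4 eps"
        using e0 q4 by (simp add: u_def w_def scaleR_add_right scaleR_diff_right power2_eq_square algebra_simps)
      moreover have "eps *\<^sub>R v eps (Suc n) = w eps + (dt/6) *\<^sub>R (F2 eps + F3 eps + 4 *\<^sub>R F4 eps)"
        using e0 q6 by (simp add: w_def scaleR_add_right)
      ultimately show ?case using q5 by blast
    qed
    have s: "((\<lambda>eps::real. eps\<^sup>2) \<longlongrightarrow> 0) ?F" by (intro tendsto_eq_intros) auto
    have c: "alpha * dt \<noteq> 0" using a0 dt by simp
    have bn: "b tn yn \<noteq> 0" "b (tn+dt) z \<noteq> 0" "b (tn+dt/2) z \<noteq> 0" for z using bnz tn by (metis surj_pair)+
    have bx: "((\<lambda>eps. b tn (x eps n)) \<longlongrightarrow> b tn yn) ?F"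
      using cont_comp[OF contb tn(1) IHx] by (simp add: yn_def)
    have ex: "((\<lambda>eps. E tn (x eps n)) \<longlongrightarrow> E tn yn) ?F"
      using cont_comp[OF contE tn(1) IHx] by (simp add: yn_def)
    note IHw' = IHw[folded w_def]
    have S1: "(u 1 \<longlongrightarrow> Udrift E b tn yn) ?F" "(F1 \<longlongrightarrow> 0) ?F"
    proof -
      have Ev: "\<forall>\<^sub>F eps in ?F. eps\<^sup>2 *\<^sub>R u 1 eps = w eps + (alpha*dt) *\<^sub>R (wedge (u 1 eps) (b tn (x eps n)) + E tn (x eps n))"
        using st by (rule eventually_mono) (simp add: F1_def)
      show "(u 1 \<longlongrightarrow> Udrift E b tn yn) ?F" "(F1 \<longlongrightarrow> 0) ?F"
        using stage[OF c bn(1) s IHw' bx ex Ev] unfolding F1_def[abs_def] Udrift_def by auto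
    qed
    have g2: "((\<lambda>eps. w eps - (alpha*dt) *\<^sub>R F1 eps) \<longlongrightarrow> 0) ?F"
      using IHw' S1(2) by (intro tendsto_eq_intros) auto
    have S2: "(u 2 \<longlongrightarrow> Udrift E b tn yn) ?F" "(F2 \<longlongrightarrow> 0) ?F"
    proof -
      have Ev: "\<forall>\<^sub>F eps in ?F. eps\<^sup>2 *\<^sub>R u 2 eps = (w eps - (alpha*dt) *\<^sub>R F1 eps) + (alpha*dt) *\<^sub>R (wedge (u 2 eps) (b tn (x eps n)) + E tn (x eps n))"
        using st by (rule eventually_mono) (simp add: F2_def)
      show "(u 2 \<longlongrightarrow> Udrift E b tn yn) ?F" "(F2 \<longlongrightarrow> 0) ?F"
        using stage[OF c bn(1) s g2 bx ex Ev] unfolding F2_def[abs_def] Udrift_def by auto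
    qed
    define y2 where "y2 = yn + dt *\<^sub>R Udrift E b tn yn"
    have P3: "(p3 \<longlongrightarrow> y2) ?F" unfolding p3_def[abs_def] y2_def
      using IHx S2(1) by (intro tendsto_intros) (simp add: yn_def)
    have g3: "((\<lambda>eps. w eps + ((1-alpha)*dt) *\<^sub>R F2 eps) \<longlongrightarrow> 0) ?F"
      using IHw' S2(2) by (intro tendsto_eq_intros) auto
    have S3: "(u 3 \<longlongrightarrow> Udrift E b (tn+dt) y2) ?F" "(F3 \<longlongrightarrow> 0) ?F"
    proof -
      have Ev: "\<forall>\<^sub>F eps in ?F. eps\<^sup>2 *\<^sub>R u 3 eps = (w eps + ((1-alpha)*dt) *\<^sub>R F2 eps) + (alpha*dt) *\<^sub>R (wedge (u 3 eps) (b (tn+dt) (p3 eps)) + E (tn+dt) (p3 eps))"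
        using st by (rule eventually_mono) (simp add: F3_def)
      show "(u 3 \<longlongrightarrow> Udrift E b (tn+dt) y2) ?F" "(F3 \<longlongrightarrow> 0) ?F"
        using stage[OF c bn(2) s g3 cont_comp[OF contb tn(2) P3] cont_comp[OF contE tn(2) P3] Ev] unfolding F3_def[abs_def] Udrift_def by auto
    qed
    define y3 where "y3 = yn + (dt/4) *\<^sub>R (Udrift E b tn yn + Udrift E b (tn+dt) y2)"
    have P4: "(p4 \<longlongrightarrow> y3) ?F" unfolding p4_def[abs_def] y3_def
      using IHx S2(1) S3(1) by (intro tendsto_intros) (simp add: yn_def)
    have g4: "((\<lambda>eps. w eps + dt *\<^sub>R (beta *\<^sub>R F1 eps + eta *\<^sub>R F2 eps + gamma *\<^sub>R F3 eps)) \<longlongrightarrow> 0) ?F"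
      using IHw' S1(2) S2(2) S3(2) by (intro tendsto_eq_intros) auto
    have S4: "(u 4 \<longlongrightarrow> Udrift E b (tn+dt/2) y3) ?F" "(F4 \<longlongrightarrow> 0) ?F"
    proof -
      have Ev: "\<forall>\<^sub>F eps in ?F. eps\<^sup>2 *\<^sub>R u 4 eps = (w eps + dt *\<^sub>R (beta *\<^sub>R F1 eps + eta *\<^sub>R F2 eps + gamma *\<^sub>R F3 eps)) + (alpha*dt) *\<^sub>R (wedge (u 4 eps) (b (tn+dt/2) (p4 eps)) + E (tn+dt/2) (p4 eps))"
        using st by (rule eventually_mono) (simp add: F4_def)
      show "(u 4 \<longlongrightarrow> Udrift E b (tn+dt/2) y3) ?F" "(F4 \<longlongrightarrow> 0) ?F"
        using stage[OF c bn(3) s g4 cont_comp[OF contb tn(3) P4] cont_comp[OF contE tn(3) P4] Ev] unfolding F4_def[abs_def] Udrift_def by auto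
    qed
    have X: "((\<lambda>eps. x eps n + (dt/6) *\<^sub>R (u 2 eps + u 3 eps + 4 *\<^sub>R u 4 eps)) \<longlongrightarrow>
        yn + (dt/6) *\<^sub>R (Udrift E b tn yn + Udrift E b (tn+dt) y2 + 4 *\<^sub>R Udrift E b (tn+dt/2) y3)) ?F"
      using IHx S2(1) S3(1) S4(1) by (intro tendsto_intros) (simp add: yn_def)
    have Xeq: "yn + (dt/6) *\<^sub>R (Udrift E b tn yn + Udrift E b (tn+dt) y2 + 4 *\<^sub>R Udrift E b (tn+dt/2) y3)
        = y_seq E b dt y0 (Suc n)"
      by (simp add: yn_def y2_def y3_def tn_def y_step_def Let_def)
    have W: "((\<lambda>eps. w eps + (dt/6) *\<^sub>R (F2 eps + F3 eps + 4 *\<^sub>R F4 eps)) \<longlongrightarrow> 0) ?F"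
      using IHw' S2(2) S3(2) S4(2) by (intro tendsto_eq_intros) auto
    show ?case
    proof
      show "((\<lambda>eps. x eps (Suc n)) \<longlongrightarrow> y_seq E b dt y0 (Suc n)) ?F"
      proof (rule Lim_transform_eventually[OF X[unfolded Xeq]])
        show "\<forall>\<^sub>F eps in ?F. x eps n + (dt/6) *\<^sub>R (u 2 eps + u 3 eps + 4 *\<^sub>R u 4 eps) = x eps (Suc n)"
          using st by (rule eventually_mono) simp
      qed
      show "((\<lambda>eps. eps *\<^sub>R v eps (Suc n)) \<longlongrightarrow> 0) ?F"
      proof (rule Lim_transform_eventually[OF W])
        show "\<forall>\<^sub>F eps in ?F. w eps + (dt/6) *\<^sub>R (F2 eps + F3 eps + 4 *\<^sub>R F4 eps) = eps *\<^sub>R v eps (Suc n)"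
          using st by (rule eventually_mono) simp
      qed
    qed
  qed
  then show ?thesis by blast
qed

end
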